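(* Let $N\ge1$ and let $\mathfrak{g}^{(N)}$ be the Lie–Poisson algebra with coordinate functions $y_i^\alpha$ ($\alpha=1,2,3$, $i=0,\dots,N-1$) and brackets $$\{y_i^\alpha,y_j^\beta\}=\begin{cases}\epsilon^{\alpha\beta}_{\ \ \gamma}\,y^\gamma_{i+j}, & i+j<N,\\ 0,& i+j\ge N,\end{cases}$$ extended to polynomial functions by bilinearity and the Leibniz rule. Fix $\mathbf{b}=(b^1,b^2,b^3)^T\in\mathbb{R}^3$ (a constant), write $\mathbf{y}_i=(y_i^1,y_i^2,y_i^3)^T$ and let $\langle\cdot,\cdot\rangle$ be the Euclidean scalar product. For $k=1,\dots,N$ define $$H_k=2\langle\mathbf{b},\mathbf{y}_{k-1}\rangle+\sum_{i=0}^{k-2}\langle\mathbf{y}_i,\mathbf{y}_{k-i-2}\rangle,\qquad C_k=\sum_{i=k-1}^{N-1}\langle\mathbf{y}_i,\mathbf{y}_{N+k-i-2}\rangle.$$ Then, with $\mathcal{L}(\lambda)=\sum_{\alpha=1}^3\sigma^\alpha\big[b^\alpha+\sum_{i=0}^{N-1}y_i^\alpha\lambda^{-i-1}\big]$, one has $4\det(\mathcal{L}(\lambda)-\mu\mathbb 1)=4\mu^2+\langle\mathbf{b},\mathbf{b}\rangle+\sum_{k=1}^N H_k\lambda^{-k}+\sum_{k=1}^N C_k\lambda^{-N-k}$, and $$\{H_i,H_k\}=\{C_i,H_k\}=\{C_i,C_k\}=0\qquad (i,k=1,\dots,N).$$ Moreover each $C_k$ is a Casimir function of $\mathfrak{g}^{(N)}$: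 $\{C_k,y_j^\beta\}=0$ for all $\beta=1,2,3$, $j=0,\dots,N-1$, $k=1,\dots,N$.
   Context: $\epsilon^{\alpha\beta}_{\ \ \gamma}$ is the totally skew-symmetric tensor with $\epsilon^{12}_{\ \ 3}=1$, and repeated index $\gamma$ is summed over $1,2,3$. The matrices are $\sigma^1=\tfrac12\begin{pmatrix}0&\mathrm{i}\\ \mathrm{i}&0\end{pmatrix}$, $\sigma^2=\tfrac12\begin{pmatrix}0&1\\-1&0\end{pmatrix}$, $\sigma^3=\tfrac12\begin{pmatrix}\mathrm{i}&0\\0&-\mathrm{i}\end{pmatrix}$, and $\mathbb 1$ is the $2\times 2$ identity. Empty sums are zero. *)

theory Defs
  imports "HOL-Analysis.Analysis"
begin

text \<open>Points of the phase space: y i a is the coordinate y_i^a (i = 0..N-1, a = 1,2,3);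
  values at other indices are irrelevant.  Vectors in R^3 are functions on {1,2,3}.\<close>

type_synonym point = "nat \<Rightarrow> nat \<Rightarrow> real"

definition eps :: "nat \<Rightarrow> nat \<Rightarrow> nat \<Rightarrow> real" where
  "eps a b c =
    (if (a,b,c) \<in> {(1,2,3),(2,3,1),(3,1,2)} then 1
     else if (a,b,c) \<in> {(2,1,3),(3,2,1),(1,3,2)} then -1 else 0)"

definition ip :: "(nat \<Rightarrow> real) \<Rightarrow> (nat \<Rightarrow> real) \<Rightarrow> real" where
  "ip u v = (\<Sum>a\<in>{1,2,3}. u a * v a)"

definition pd :: "(point \<Rightarrow> real) \<Rightarrow> nat \<Rightarrow> nat \<Rightarrow> point \<Rightarrow> real" where
  "pd f i a y = deriv (\<lambda>t. f (y(i := (y i)(a := t)))) (y i a)"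

definition coord :: "nat \<Rightarrow> nat \<Rightarrow> point \<Rightarrow> real" where
  "coord i a = (\<lambda>y. y i a)"

text \<open>Lie--Poisson bracket of g^(N): the unique extension (bilinear, Leibniz) of
  {y_i^a, y_j^b} = eps^{ab}_c y_{i+j}^c (i+j<N), 0 otherwise, to polynomial functions.\<close>
definition pbracket :: "nat \<Rightarrow> (point \<Rightarrow> real) \<Rightarrow> (point \<Rightarrow> real) \<Rightarrow> point \<Rightarrow> real" where
  "pbracket N f g y =
    (\<Sum>i<N. \<Sum>j<N. \<Sum>a\<in>{1,2,3}. \<Sum>b\<in>{1,2,3}.
       pd f i a y * pd g j b y *
       (if i + j < N then (\<Sum>c\<in>{1,2,3}. eps a b c * y (i + j) c) else 0))"

definition Hk :: "(nat \<Rightarrow> real) \<Rightarrow> nat \<Rightarrow> point \<Rightarrow> real" where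
  "Hk bv k y = 2 * ip bv (y (k - 1)) + (\<Sum>i<k - 1. ip (y i) (y (k - i - 2)))"

definition Ck :: "nat \<Rightarrow> nat \<Rightarrow> point \<Rightarrow> real" where
  "Ck N k y = (\<Sum>i\<in>{k - 1..<N}. ip (y i) (y (N + k - i - 2)))"

definition mat2 :: "complex \<Rightarrow> complex \<Rightarrow> complex \<Rightarrow> complex \<Rightarrow> complex^2^2" where
  "mat2 p q r s = (\<chi> i j. if i = 1 then (if j = 1 then p else q) else (if j = 1 then r else s))"

definition msc :: "complex \<Rightarrow> complex^2^2 \<Rightarrow> complex^2^2" where
  "msc c M = (\<chi> i j. c * M $ i $ j)"

definition sigma :: "nat \<Rightarrow> complex^2^2" where
  "sigma a = (if a = 1 then msc (1/2) (mat2 0 \<i> \<i> 0)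
              else if a = 2 then msc (1/2) (mat2 0 1 (-1) 0)
              else msc (1/2) (mat2 \<i> 0 0 (-\<i>)))"

definition Lax :: "nat \<Rightarrow> (nat \<Rightarrow> real) \<Rightarrow> point \<Rightarrow> complex \<Rightarrow> complex^2^2" where
  "Lax N bv y lam = (\<Sum>a\<in>{1,2,3}.
     msc (of_real (bv a) + (\<Sum>i<N. of_real (y i a) * inverse lam ^ (i + 1))) (sigma a))"

end

theory Submission
  imports Defs
begin


lemma det_part:
  fixes y :: point and x mu :: complex
  shows "4 * det (Lax N bv y lam - msc mu (mat 1)) =
    4 * mu^2 + (\<Sum>a\<in>{1,2,3::nat}. (of_real (bv a) + (\<Sum>i<N. of_real (y i a) * inverse lam ^ (i + 1)))^2)"
proof -
  have n12: "(2::2) \<noteq> 1" by simp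
  show ?thesis
  unfolding det_2 Lax_def
  by (simp add: msc_def sigma_def mat2_def mat_def n12 power2_eq_square algebra_simps)
qed

lemma pow_help: "2 \<le> a \<Longrightarrow> (x::'a::monoid_mult) * (x * x ^ (a - 2)) = x ^ a"
  by (metis add_2_eq_Suc le_add_diff_inverse power_Suc power_add)

lemma sq_expand:
  fixes Y :: "nat \<Rightarrow> 'a::comm_ring_1" and x :: 'a
  shows "(\<Sum>i<N. Y i * x^(i+1))^2 =
     (\<Sum>k\<in>{1..N}. (\<Sum>i<k-1. Y i * Y (k-i-2)) * x^k)
   + (\<Sum>k\<in>{1..N}. (\<Sum>i\<in>{k-1..<N}. Y i * Y (N+k-i-2)) * x^(N+k))"
proof -
  define f where "f = (\<lambda>(i,j). Y i * Y j * x^(i+j+2))"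
  define A where "A = {..<N} \<times> {..<N}"
  have "(\<Sum>i<N. Y i * x^(i+1))^2 = (\<Sum>i<N. \<Sum>j<N. Y i * Y j * x^(i+j+2))"
    by (simp add: power2_eq_square sum_product power_add algebra_simps)
  also have "\<dots> = sum f A"
    by (simp add: A_def f_def sum.cartesian_product)
  also have "\<dots> = sum f (A \<inter> {p. fst p + snd p + 2 \<le> N}) + sum f (A - {p. fst p + snd p + 2 \<le> N})"
    by (simp add: A_def sum.Int_Diff)
  also have "sum f (A \<inter> {p. fst p + snd p + 2 \<le> N}) = (\<Sum>k\<in>{1..N}. (\<Sum>i<k-1. Y i * Y (k-i-2)) * x^k)"
  proof -
    have "(\<Sum>k\<in>{1..N}. (\<Sum>i<k-1. Y i * Y (k-i-2)) * x^k)
        = (\<Sum>k\<in>{1..N}. \<Sum>i<k-1. Y i * Y (k-i-2) * x^k)"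
      by (simp add: sum_distrib_right)
    also have "\<dots> = (\<Sum>(k,i)\<in>Sigma {1..N} (\<lambda>k. {..<k-1}). Y i * Y (k-i-2) * x^k)"
      by (rule sum.Sigma) auto
    also have "\<dots> = sum f (A \<inter> {p. fst p + snd p + 2 \<le> N})"
      by (rule sum.reindex_bij_witness[where i="\<lambda>(i,j). (i+j+2, i)" and j="\<lambda>(k,i). (i, k-i-2)"])
         (auto simp: A_def f_def pow_help)
    finally show ?thesis by simp
  qed
  also have "sum f (A - {p. fst p + snd p + 2 \<le> N}) = (\<Sum>k\<in>{1..N}. (\<Sum>i\<in>{k-1..<N}. Y i * Y (N+k-i-2)) * x^(N+k))"
  proof -
    have "(\<Sum>k\<in>{1..N}. (\<Sum>i\<in>{k-1..<N}. Y i * Y (N+k-i-2)) * x^(N+k))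
        = (\<Sum>k\<in>{1..N}. \<Sum>i\<in>{k-1..<N}. Y i * Y (N+k-i-2) * x^(N+k))"
      by (simp add: sum_distrib_right)
    also have "\<dots> = (\<Sum>(k,i)\<in>Sigma {1..N} (\<lambda>k. {k-1..<N}). Y i * Y (N+k-i-2) * x^(N+k))"
      by (rule sum.Sigma) auto
    also have "\<dots> = sum f (A - {p. fst p + snd p + 2 \<le> N})"
      by (rule sum.reindex_bij_witness[where i="\<lambda>(i,j). (i+j+2-N, i)" and j="\<lambda>(k,i). (i, N+k-i-2)"])
         (auto simp: A_def f_def pow_help)
    finally show ?thesis by simp
  qed
  finally show ?thesis .
qed

lemma lin_shift:
  fixes Y :: "nat \<Rightarrow> 'a::comm_ring_1"
  shows "(\<Sum>i<N. Y i * x^(i+1)) = (\<Sum>k\<in>{1..N}. Y (k-1) * x^k)"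
  by (rule sum.reindex_bij_witness[where i="\<lambda>k. k - 1" and j="\<lambda>i. i+1"]) auto

lemma comp_expand:
  fixes Y :: "nat \<Rightarrow> 'a::comm_ring_1"
  shows "(B + (\<Sum>i<N. Y i * x^(i+1)))^2 = B^2 +
     (\<Sum>k\<in>{1..N}. (2 * B * Y (k-1) + (\<Sum>i<k-1. Y i * Y (k-i-2))) * x^k)
   + (\<Sum>k\<in>{1..N}. (\<Sum>i\<in>{k-1..<N}. Y i * Y (N+k-i-2)) * x^(N+k))"
proof -
  have "(B + (\<Sum>i<N. Y i * x^(i+1)))^2 = B^2 + 2 * B * (\<Sum>i<N. Y i * x^(i+1)) + (\<Sum>i<N. Y i * x^(i+1))^2"
    by (simp add: power2_eq_square algebra_simps)
  also have "2 * B * (\<Sum>i<N. Y i * x^(i+1)) = (\<Sum>k\<in>{1..N}. 2 * B * Y (k-1) * x^k)"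
    unfolding lin_shift by (simp add: sum_distrib_left mult.assoc)
  also have "(\<Sum>i<N. Y i * x^(i+1))^2 =
     (\<Sum>k\<in>{1..N}. (\<Sum>i<k-1. Y i * Y (k-i-2)) * x^k)
   + (\<Sum>k\<in>{1..N}. (\<Sum>i\<in>{k-1..<N}. Y i * Y (N+k-i-2)) * x^(N+k))" by (rule sq_expand)
  finally show ?thesis
    by (simp add: algebra_simps sum.distrib)
qed

lemma det_full:
  fixes y :: point
  shows "4 * det (Lax N bv y lam - msc mu (mat 1)) =
             4 * mu ^ 2 + of_real (ip bv bv)
             + (\<Sum>k\<in>{1..N}. of_real (Hk bv k y) * inverse lam ^ k)
             + (\<Sum>k\<in>{1..N}. of_real (Ck N k y) * inverse lam ^ (N + k))"
proof -
  define x where "x = inverse lam"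
  have e: "of_real (Hk bv k y) = 2 * (\<Sum>a\<in>{1,2,3::nat}. complex_of_real (bv a) * of_real (y (k-1) a))
     + (\<Sum>a\<in>{1,2,3::nat}. \<Sum>i<k-1. complex_of_real (y i a) * of_real (y (k-i-2) a))" for k
    unfolding Hk_def ip_def by (simp add: sum.distrib)
  have c: "of_real (Ck N k y) = (\<Sum>a\<in>{1,2,3::nat}. \<Sum>i\<in>{k-1..<N}. complex_of_real (y i a) * of_real (y (N+k-i-2) a))" for k
    unfolding Ck_def ip_def by (simp add: sum.distrib)
  have b: "of_real (ip bv bv) = (\<Sum>a\<in>{1,2,3::nat}. (complex_of_real (bv a))^2)"
    unfolding ip_def by (simp add: power2_eq_square)
  show ?thesis
    unfolding det_part x_def[symmetric] comp_expand e c b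
    by (simp add: sum.distrib sum_distrib_left sum_distrib_right sum.swap[of _ "{1,2,3::nat}"] algebra_simps)
qed



definition upd :: "point \<Rightarrow> nat \<Rightarrow> nat \<Rightarrow> real \<Rightarrow> point" where
  "upd y i a t = y(i := (y i)(a := t))"

lemma upd_app: "upd y i a t p c = (if p = i \<and> c = a then t else y p c)"
  by (simp add: upd_def)

lemma upd_self: "upd y i a (y i a) = y"
  by (auto simp: upd_def)

lemma pd_from_deriv:
  "((\<lambda>t. f (upd y i a t)) has_real_derivative D) (at (y i a)) \<Longrightarrow> pd f i a y = D"
  unfolding pd_def upd_def[symmetric] by (rule DERIV_imp_deriv)

lemma d_coordv: "((\<lambda>t. upd y i a t p c) has_real_derivative (if p = i \<and> c = a then 1 else 0)) (at s)"
proof (cases "p = i \<and> c = a")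
  case True
  then show ?thesis by (simp add: upd_app)
next
  case False
  have e1: "(\<lambda>t. upd y i a t p c) = (\<lambda>t. y p c)" using False by (auto simp: upd_app)
  have e2: "(if p = i \<and> c = a then 1 else 0) = (0::real)" using False by simp
  show ?thesis unfolding e1 e2 by (rule DERIV_const)
qed

lemma d_ip:
  assumes "a \<in> {1,2,3}"
  shows "((\<lambda>t. ip (upd y i a t p) (upd y i a t q)) has_real_derivative
     ((if p = i then y q a else 0) + (if q = i then y p a else 0))) (at (y i a))"
  unfolding ip_def
  apply (rule DERIV_cong[OF DERIV_sum[OF DERIV_mult[OF d_coordv d_coordv]]])
  using assms by (auto simp: upd_app)

lemma d_lin:
  assumes "a \<in> {1,2,3}"
  shows "((\<lambda>t. ip bv (upd y i a t p)) has_real_derivative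
     (if p = i then bv a else 0)) (at (y i a))"
  unfolding ip_def
  apply (rule DERIV_cong[OF DERIV_sum[OF DERIV_cmult[OF d_coordv]]])
  using assms by (auto simp: upd_app)

lemma sum_delta_rev:
  "(\<Sum>l<(n::nat). if n - 1 - l = i then f l else (0::real)) = (if i < n then f (n - 1 - i) else 0)"
proof (cases "i < n")
  case True
  have "(\<Sum>l<n. if n - 1 - l = i then f l else (0::real)) = (\<Sum>l<n. if l = n - 1 - i then f l else 0)"
  proof (rule sum.cong)
    fix l assume "l \<in> {..<n}"
    then have "l < n" by simp
    then have "(n - 1 - l = i) = (l = n - 1 - i)" using True by (metis Suc_pred' diff_Suc_eq_diff_pred diff_commute diff_diff_cancel less_Suc_eq_le less_nat_zero_code not_gr_zero)
    then show "(if n - 1 - l = i then f l else 0) = (if l = n - 1 - i then f l else 0)" by simp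
  qed simp
  also have "\<dots> = f (n - 1 - i)" using True by simp
  finally show ?thesis using True by simp
next
  case False
  then show ?thesis by (auto intro!: sum.neutral)
qed

definition zz :: "(nat \<Rightarrow> real) \<Rightarrow> point \<Rightarrow> nat \<Rightarrow> nat \<Rightarrow> real" where
  "zz bv y n = (if n = 0 then bv else y (n - 1))"

lemma pd_H:
  assumes "a \<in> {1,2,3}" and "1 \<le> k"
  shows "pd (Hk bv k) i a y = (if i < k then 2 * zz bv y (k - 1 - i) a else 0)"
proof (rule pd_from_deriv)
  have D: "((\<lambda>t. Hk bv k (upd y i a t)) has_real_derivative
     (2 * (if k - 1 = i then bv a else 0) +
      (\<Sum>l<k-1. (if l = i then y (k - l - 2) a else 0) + (if k - l - 2 = i then y l a else 0))))
     (at (y i a))"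
    unfolding Hk_def
    by (intro DERIV_add DERIV_cmult DERIV_sum d_lin d_ip assms)
  have s1: "(\<Sum>l<k-1. (if l = i then y (k - l - 2) a else 0)) = (if i < k - 1 then y (k - i - 2) a else 0)"
    by simp
  have s2: "(\<Sum>l<k-1. (if k - l - 2 = i then y l a else 0)) = (if i < k - 1 then y (k - 2 - i) a else 0)"
    using sum_delta_rev[of "k-1" i "\<lambda>l. y l a"] by (simp add: diff_commute)
  show "((\<lambda>t. Hk bv k (upd y i a t)) has_real_derivative (if i < k then 2 * zz bv y (k - 1 - i) a else 0)) (at (y i a))"
  proof (rule DERIV_cong[OF D])
    consider "i < k - 1" | "i = k - 1" | "k \<le> i" using assms(2) by linarith
    then show "2 * (if k - 1 = i then bv a else 0) +
      (\<Sum>l<k-1. (if l = i then y (k - l - 2) a else 0) + (if k - l - 2 = i then y l a else 0))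
      = (if i < k then 2 * zz bv y (k - 1 - i) a else 0)"
    proof cases
      case 1
      then have "k - 1 - i \<noteq> 0" "k - 1 - i - 1 = k - i - 2" "k - 2 - i = k - i - 2" "k - 1 \<noteq> i" "i < k" by linarith+
      then show ?thesis unfolding sum.distrib s1 s2 zz_def using 1 by simp
    next
      case 2
      then have "k - 1 - i = 0" "i < k" "\<not> i < k - 1" using assms(2) by linarith+
      then show ?thesis unfolding sum.distrib s1 s2 zz_def using 2 by simp
    next
      case 3
      then have "\<not> i < k" "k - 1 \<noteq> i" "\<not> i < k - 1" using assms(2) by linarith+
      then show ?thesis unfolding sum.distrib s1 s2 by simp
    qed
  qed
qed

lemma iff_C:
  assumes "k - 1 \<le> l" "l < N" "1 \<le> (k::nat)"
  shows "(N + k - l - 2 = i) = (l = N + k - 2 - i \<and> k - 1 \<le> i \<and> i < N)"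
proof
  assume "N + k - l - 2 = i" then show "l = N + k - 2 - i \<and> k - 1 \<le> i \<and> i < N" using assms by arith
next
  assume "l = N + k - 2 - i \<and> k - 1 \<le> i \<and> i < N" then show "N + k - l - 2 = i" using assms by arith
qed

lemma pd_C:
  assumes "a \<in> {1,2,3}" and "1 \<le> k"
  shows "pd (Ck N k) i a y = (if k - 1 \<le> i \<and> i < N then 2 * y (N + k - 2 - i) a else 0)"
proof (rule pd_from_deriv)
  have D: "((\<lambda>t. Ck N k (upd y i a t)) has_real_derivative
      (\<Sum>l\<in>{k-1..<N}. (if l = i then y (N + k - l - 2) a else 0) + (if N + k - l - 2 = i then y l a else 0)))
     (at (y i a))"
    unfolding Ck_def
    by (intro DERIV_add DERIV_cmult DERIV_sum d_lin d_ip assms)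
  have e: "N + k - i - 2 = N + k - 2 - i" by simp
  have s1: "(\<Sum>l\<in>{k-1..<N}. (if l = i then y (N + k - l - 2) a else 0)) = (if k - 1 \<le> i \<and> i < N then y (N + k - 2 - i) a else 0)"
    by (simp add: e)
  have s2: "(\<Sum>l\<in>{k-1..<N}. (if N + k - l - 2 = i then y l a else 0)) = (if k - 1 \<le> i \<and> i < N then y (N + k - 2 - i) a else 0)"
  proof -
    have "(\<Sum>l\<in>{k-1..<N}. (if N + k - l - 2 = i then y l a else 0)) =
       (\<Sum>l\<in>{k-1..<N}. (if l = N + k - 2 - i then (if k - 1 \<le> i \<and> i < N then y l a else 0) else 0))"
    proof (rule sum.cong)
      fix l assume "l \<in> {k-1..<N}"
      then have "k - 1 \<le> l" "l < N" by auto
      from iff_C[OF this assms(2)] show "(if N + k - l - 2 = i then y l a else 0) =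
        (if l = N + k - 2 - i then (if k - 1 \<le> i \<and> i < N then y l a else 0) else 0)"
        by auto
    qed simp
    also have "\<dots> = (if k - 1 \<le> i \<and> i < N then y (N + k - 2 - i) a else 0)"
    proof (cases "k - 1 \<le> i \<and> i < N")
      case True
      then have "N + k - 2 - i \<in> {k-1..<N}" using assms(2) by auto
      then show ?thesis using True by simp
    next
      case False
      show ?thesis by (simp only: if_not_P[OF False] if_cancel sum.neutral_const)
    qed
    finally show ?thesis .
  qed
  show "((\<lambda>t. Ck N k (upd y i a t)) has_real_derivative (if k - 1 \<le> i \<and> i < N then 2 * y (N + k - 2 - i) a else 0)) (at (y i a))"
    apply (rule DERIV_cong[OF D])
    unfolding sum.distrib s1 s2
    by simp
qed

lemma pd_coord:
  "pd (coord j b) i a y = (if i = j \<and> a = b then 1 else 0)"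
proof (rule pd_from_deriv)
  have "(\<lambda>t. coord j b (upd y i a t)) = (\<lambda>t. upd y i a t j b)" by (simp add: coord_def)
  then show "((\<lambda>t. coord j b (upd y i a t)) has_real_derivative (if i = j \<and> a = b then 1 else 0)) (at (y i a))"
    using d_coordv[of y i a j b "y i a"] by (auto simp: eq_commute)
qed



definition PP :: "nat \<Rightarrow> point \<Rightarrow> nat \<Rightarrow> nat \<Rightarrow> nat \<Rightarrow> nat \<Rightarrow> real" where
  "PP N y i j a b = (if i + j < N then (\<Sum>c\<in>{1,2,3}. eps a b c * y (i + j) c) else 0)"

lemma pbracket_PP:
  "pbracket N f g y = (\<Sum>i<N. \<Sum>j<N. \<Sum>a\<in>{1,2,3}. \<Sum>b\<in>{1,2,3}. pd f i a y * pd g j b y * PP N y i j a b)"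
  unfolding pbracket_def PP_def by (rule refl)

lemma bracket_coord:
  assumes "j < N" "\<beta> \<in> {1,2,3}"
  shows "pbracket N f (coord j \<beta>) y = (\<Sum>i<N. \<Sum>a\<in>{1,2,3}. pd f i a y * PP N y i j a \<beta>)"
proof -
  have "pbracket N f (coord j \<beta>) y =
     (\<Sum>i<N. \<Sum>j'<N. \<Sum>a\<in>{1,2,3}. \<Sum>b\<in>{1,2,3}. pd f i a y * (if j' = j \<and> b = \<beta> then 1 else 0) * PP N y i j' a b)"
    unfolding pbracket_PP pd_coord mult.assoc by (rule refl)
  also have "\<dots> = (\<Sum>i<N. \<Sum>a\<in>{1,2,3}. \<Sum>j'<N. \<Sum>b\<in>{1,2,3}. pd f i a y * (if j' = j \<and> b = \<beta> then 1 else 0) * PP N y i j' a b)"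
    by (rule sum.cong[OF refl], rule sum.swap)
  also have "\<dots> = (\<Sum>i<N. \<Sum>a\<in>{1,2,3}. pd f i a y * PP N y i j a \<beta>)"
  proof (rule sum.cong[OF refl], rule sum.cong[OF refl])
    fix i a
    have "(\<Sum>j'<N. \<Sum>b\<in>{1,2,3}. pd f i a y * (if j' = j \<and> b = \<beta> then 1 else 0) * PP N y i j' a b)
        = (\<Sum>j'<N. if j' = j then (\<Sum>b\<in>{1,2,3}. if b = \<beta> then pd f i a y * PP N y i j' a b else 0) else 0)"
      by (rule sum.cong[OF refl]) auto
    also have "\<dots> = pd f i a y * PP N y i j a \<beta>"
      using assms by simp
    finally show "(\<Sum>j'<N. \<Sum>b\<in>{1,2,3}. pd f i a y * (if j' = j \<and> b = \<beta> then 1 else 0) * PP N y i j' a b)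
        = pd f i a y * PP N y i j a \<beta>" .
  qed
  finally show ?thesis .
qed


lemma bracket_expand:
  "pbracket N f g y = (\<Sum>j<N. \<Sum>b\<in>{1,2,3}. pd g j b y * pbracket N f (coord j b) y)"
proof -
  have "pbracket N f g y = (\<Sum>i<N. \<Sum>j<N. \<Sum>a\<in>{1,2,3}. \<Sum>b\<in>{1,2,3}. pd f i a y * pd g j b y * PP N y i j a b)"
    by (rule pbracket_PP)
  also have "\<dots> = (\<Sum>j<N. \<Sum>i<N. \<Sum>a\<in>{1,2,3}. \<Sum>b\<in>{1,2,3}. pd f i a y * pd g j b y * PP N y i j a b)"
    by (rule sum.swap)
  also have "\<dots> = (\<Sum>j<N. \<Sum>i<N. \<Sum>b\<in>{1,2,3}. \<Sum>a\<in>{1,2,3}. pd f i a y * pd g j b y * PP N y i j a b)"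
    by (rule sum.cong[OF refl], rule sum.cong[OF refl], rule sum.swap)
  also have "\<dots> = (\<Sum>j<N. \<Sum>b\<in>{1,2,3}. \<Sum>i<N. \<Sum>a\<in>{1,2,3}. pd f i a y * pd g j b y * PP N y i j a b)"
    by (rule sum.cong[OF refl], rule sum.swap)
  also have "\<dots> = (\<Sum>j<N. \<Sum>b\<in>{1,2,3}. pd g j b y * pbracket N f (coord j b) y)"
  proof (rule sum.cong[OF refl], rule sum.cong)
    fix j b assume "j \<in> {..<N}" "b \<in> {1,2,3::nat}"
    then have jN: "j < N" and bin: "b \<in> {1,2,3}" by auto
    show "(\<Sum>i<N. \<Sum>a\<in>{1,2,3}. pd f i a y * pd g j b y * PP N y i j a b) = pd g j b y * pbracket N f (coord j b) y"
      unfolding bracket_coord[OF jN bin] sum_distrib_left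
      by (rule sum.cong[OF refl], rule sum.cong[OF refl]) (simp only: ac_simps)
  qed simp
  finally show ?thesis .
qed

lemma casimir_zero_bracket:
  assumes "\<And>j b. j < N \<Longrightarrow> b \<in> {1,2,3} \<Longrightarrow> pbracket N f (coord j b) y = 0"
  shows "pbracket N f g y = 0"
  by (subst bracket_expand) (simp add: assms)

lemma inv_sum_zero:
  assumes "finite A" "\<And>x. x \<in> A \<Longrightarrow> h x \<in> A" "\<And>x. x \<in> A \<Longrightarrow> h (h x) = x"
    "\<And>x. x \<in> A \<Longrightarrow> g (h x) = - (g x :: real)"
  shows "sum g A = 0"
proof -
  have "sum g A = sum (\<lambda>x. g (h x)) A"
    by (rule sum.reindex_bij_witness[where i=h and j=h]) (use assms in auto)
  also have "\<dots> = - sum g A" using assms(4) by (simp add: sum_negf)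
  finally show ?thesis by simp
qed


definition EE :: "point \<Rightarrow> nat \<Rightarrow> nat \<Rightarrow> nat \<Rightarrow> real" where
  "EE y \<beta> p q = (\<Sum>a\<in>{1,2,3}. \<Sum>c\<in>{1,2,3}. eps a \<beta> c * y p a * y q c)"

lemma EE_antisym:
  assumes "\<beta> \<in> {1,2,3}"
  shows "EE y \<beta> q p = - EE y \<beta> p q"
  using assms by (auto simp: EE_def eps_def)

lemma sum_prod_rearr:
  "(\<Sum>a\<in>A. (2 * u a) * (\<Sum>c\<in>B. e a c * v c)) = 2 * (\<Sum>a\<in>A. \<Sum>c\<in>B. e a c * u a * (v c::real))"
  by (simp add: sum_distrib_left mult_ac)

lemma cas_term:
  assumes iN: "i < N" and k1: "1 \<le> k" and hb: "\<beta> \<in> {1,2,3}"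
  shows "(\<Sum>a\<in>{1,2,3}. pd (Ck N k) i a y * PP N y i j a \<beta>) =
       (if k - 1 \<le> i \<and> i + j < N then 2 * EE y \<beta> (N + k - 2 - i) (i + j) else 0)"
proof -
  have "(\<Sum>a\<in>{1,2,3}. pd (Ck N k) i a y * PP N y i j a \<beta>) =
     (\<Sum>a\<in>{1,2,3}. (if k - 1 \<le> i then 2 * y (N + k - 2 - i) a else 0) * PP N y i j a \<beta>)"
  proof (rule sum.cong[OF refl])
    fix a assume ha: "a \<in> {1,2,3::nat}"
    show "pd (Ck N k) i a y * PP N y i j a \<beta> = (if k - 1 \<le> i then 2 * y (N + k - 2 - i) a else 0) * PP N y i j a \<beta>"
      using pd_C[OF ha k1, of N i y] iN by simp
  qed
  also have "\<dots> = (if k - 1 \<le> i \<and> i + j < N then 2 * EE y \<beta> (N + k - 2 - i) (i + j) else 0)"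
  proof (cases "k - 1 \<le> i \<and> i + j < N")
    case True
    have "(\<Sum>a\<in>{1,2,3}. (if k - 1 \<le> i then 2 * y (N + k - 2 - i) a else 0) * PP N y i j a \<beta>)
       = (\<Sum>a\<in>{1,2,3}. (2 * y (N + k - 2 - i) a) * (\<Sum>c\<in>{1,2,3}. eps a \<beta> c * y (i + j) c))"
      by (rule sum.cong[OF refl]) (use True in \<open>simp add: PP_def del: sum.insert\<close>)
    also have "\<dots> = 2 * EE y \<beta> (N + k - 2 - i) (i + j)"
      unfolding EE_def by (rule sum_prod_rearr)
    finally show ?thesis by (simp only: if_P[OF True])
  next
    case False
    have z: "\<And>a. (if k - 1 \<le> i then 2 * y (N + k - 2 - i) a else 0) * PP N y i j a \<beta> = 0"
      using False unfolding PP_def by (simp del: sum.insert)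
    show ?thesis by (simp only: z sum.neutral_const if_not_P[OF False])
  qed
  finally show ?thesis .
qed

lemma cas_arith:
  fixes i j k N :: nat
  assumes "i < N" "k - 1 \<le> i" "i + j < N" "1 \<le> k" "k \<le> N"
  shows "N + k - 2 - j - i < N" "k - 1 \<le> N + k - 2 - j - i" "N + k - 2 - j - i + j < N"
    "N + k - 2 - j - (N + k - 2 - j - i) = i"
    "N + k - 2 - (N + k - 2 - j - i) = i + j" "N + k - 2 - j - i + j = N + k - 2 - i"
  using assms by arith+

lemma casimir:
  assumes "1 \<le> k" "k \<le> N" "j < N" "\<beta> \<in> {1,2,3}"
  shows "pbracket N (Ck N k) (coord j \<beta>) y = 0"
proof -
  have "pbracket N (Ck N k) (coord j \<beta>) y = (\<Sum>i<N. \<Sum>a\<in>{1,2,3}. pd (Ck N k) i a y * PP N y i j a \<beta>)"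
    using assms by (intro bracket_coord) auto
  also have "\<dots> = (\<Sum>i<N. if k - 1 \<le> i \<and> i + j < N then 2 * EE y \<beta> (N + k - 2 - i) (i + j) else 0)"
  proof (rule sum.cong[OF refl])
    fix i assume "i \<in> {..<N}"
    then have "i < N" by simp
    then show "(\<Sum>a\<in>{1,2,3}. pd (Ck N k) i a y * PP N y i j a \<beta>) = (if k - 1 \<le> i \<and> i + j < N then 2 * EE y \<beta> (N + k - 2 - i) (i + j) else 0)"
      by (rule cas_term) (use assms in auto)
  qed
  also have "\<dots> = (\<Sum>i\<in>{i\<in>{..<N}. k - 1 \<le> i \<and> i + j < N}. 2 * EE y \<beta> (N + k - 2 - i) (i + j))"
    by (rule sum.inter_filter[symmetric]) simp
  also have "\<dots> = 0"
  proof (rule inv_sum_zero[where h="\<lambda>i. N + k - 2 - j - i"])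
    fix i assume "i \<in> {i\<in>{..<N}. k - 1 \<le> i \<and> i + j < N}"
    then have i: "i < N" "k - 1 \<le> i" "i + j < N" by auto
    note ar = cas_arith[OF i assms(1,2)]
    show "N + k - 2 - j - i \<in> {i\<in>{..<N}. k - 1 \<le> i \<and> i + j < N}" using ar(1,2,3) by blast
    show "N + k - 2 - j - (N + k - 2 - j - i) = i" by (rule ar(4))
    show "2 * EE y \<beta> (N + k - 2 - (N + k - 2 - j - i)) (N + k - 2 - j - i + j) =
          - (2 * EE y \<beta> (N + k - 2 - i) (i + j))"
      unfolding ar(5) ar(6) EE_antisym[OF assms(4), of y "i + j" "N + k - 2 - i"] by simp
  qed simp
  finally show ?thesis .
qed



definition TT :: "(nat \<Rightarrow> real) \<Rightarrow> (nat \<Rightarrow> real) \<Rightarrow> (nat \<Rightarrow> real) \<Rightarrow> real" where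
  "TT u v w = (\<Sum>a\<in>{1,2,3}. \<Sum>b\<in>{1,2,3}. \<Sum>c\<in>{1,2,3}. eps a b c * u a * v b * w c)"

lemma TT_swap12: "TT v u w = - TT u v w"
  by (simp add: TT_def eps_def algebra_simps)

lemma TT_swap23: "TT u w v = - TT u v w"
  by (simp add: TT_def eps_def algebra_simps)

definition RR :: "nat \<Rightarrow> nat \<Rightarrow> nat \<Rightarrow> (nat \<times> nat) set" where
  "RR N m k = {(i,j). i < m \<and> j < k \<and> i + j < N}"

lemma RR_finite: "finite (RR N m k)"
  by (rule finite_subset[of _ "{..<m} \<times> {..<k}"]) (auto simp: RR_def)

lemma ar1:
  fixes i j k m N :: nat
  assumes "i < m" "j < k" "i + j < N" "i + j + 1 < k" "m \<le> k" "k \<le> N"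
  shows "i < m" "k - 2 - i - j < k" "i + (k - 2 - i - j) < N" "i + (k - 2 - i - j) + 1 < k"
    "k - 2 - i - (k - 2 - i - j) = j"
    "k - 1 - (k - 2 - i - j) = i + j + 1" "i + (k - 2 - i - j) + 1 = k - 1 - j"
  using assms by arith+

lemma ar2:
  fixes i j k m N :: nat
  assumes "i < m" "j < k" "i + j < N" "\<not> i + j + 1 < k" "m \<le> k" "k \<le> N"
  shows "j - (k - m) < m" "i + (k - m) < k" "j - (k - m) + (i + (k - m)) < N" "\<not> j - (k - m) + (i + (k - m)) + 1 < k"
    "i + (k - m) - (k - m) = i" "j - (k - m) + (k - m) = j"
    "m - 1 - (j - (k - m)) = k - 1 - j" "k - 1 - (i + (k - m)) = m - 1 - i"
    "j - (k - m) + (i + (k - m)) + 1 = i + j + 1"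
  using assms by arith+

lemma HH_zero_le:
  assumes "m \<le> k" "k \<le> N"
  shows "(\<Sum>(i,j)\<in>RR N m k. TT (zz bv y (m - 1 - i)) (zz bv y (k - 1 - j)) (zz bv y (i + j + 1))) = 0"
proof -
  define g where "g = (\<lambda>(i,j). TT (zz bv y (m - 1 - i)) (zz bv y (k - 1 - j)) (zz bv y (i + j + 1)))"
  define P where "P = {(i::nat,j::nat). i + j + 1 < k}"
  have "sum g (RR N m k) = sum g (RR N m k \<inter> P) + sum g (RR N m k - P)"
    by (rule sum.Int_Diff[OF RR_finite])
  also have "sum g (RR N m k \<inter> P) = 0"
  proof (rule inv_sum_zero[where h="\<lambda>(i,j). (i, k - 2 - i - j)"])
    show "finite (RR N m k \<inter> P)" using RR_finite by simp
  next
    fix x assume "x \<in> RR N m k \<inter> P"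
    then obtain i j where x: "x = (i,j)" and h: "i < m" "j < k" "i + j < N" "i + j + 1 < k"
      by (auto simp: RR_def P_def)
    note a = ar1[OF h assms]
    show "(\<lambda>(i,j). (i, k - 2 - i - j)) x \<in> RR N m k \<inter> P"
      using a(1-4) by (simp add: x RR_def P_def)
    show "(\<lambda>(i,j). (i, k - 2 - i - j)) ((\<lambda>(i,j). (i, k - 2 - i - j)) x) = x"
      using a(5) by (simp add: x)
    show "g ((\<lambda>(i,j). (i, k - 2 - i - j)) x) = - g x"
      unfolding x g_def prod.case a(6) a(7) by (rule TT_swap23)
  qed
  also have "sum g (RR N m k - P) = 0"
  proof (rule inv_sum_zero[where h="\<lambda>(i,j). (j - (k - m), i + (k - m))"])
    show "finite (RR N m k - P)" using RR_finite by simp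
  next
    fix x assume "x \<in> RR N m k - P"
    then obtain i j where x: "x = (i,j)" and h: "i < m" "j < k" "i + j < N" "\<not> i + j + 1 < k"
      by (auto simp: RR_def P_def)
    note a = ar2[OF h assms]
    show "(\<lambda>(i,j). (j - (k - m), i + (k - m))) x \<in> RR N m k - P"
      using a(1-4) by (simp add: x RR_def P_def)
    show "(\<lambda>(i,j). (j - (k - m), i + (k - m))) ((\<lambda>(i,j). (j - (k - m), i + (k - m))) x) = x"
      using a(5,6) by (simp add: x)
    show "g ((\<lambda>(i,j). (j - (k - m), i + (k - m))) x) = - g x"
      unfolding x g_def prod.case a(7) a(8) a(9) by (rule TT_swap12)
  qed
  finally show ?thesis by (simp add: g_def)
qed

lemma HH_swap:
  "(\<Sum>(i,j)\<in>RR N m k. TT (zz bv y (m - 1 - i)) (zz bv y (k - 1 - j)) (zz bv y (i + j + 1))) =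
   - (\<Sum>(i,j)\<in>RR N k m. TT (zz bv y (k - 1 - i)) (zz bv y (m - 1 - j)) (zz bv y (i + j + 1)))"
proof -
  have "(\<Sum>(i,j)\<in>RR N k m. TT (zz bv y (k - 1 - i)) (zz bv y (m - 1 - j)) (zz bv y (i + j + 1))) =
        (\<Sum>(i,j)\<in>RR N m k. TT (zz bv y (k - 1 - j)) (zz bv y (m - 1 - i)) (zz bv y (j + i + 1)))"
    by (rule sum.reindex_bij_witness[where i="\<lambda>(a,b). (b,a)" and j="\<lambda>(a,b). (b,a)"])
       (auto simp: RR_def)
  also have "\<dots> = - (\<Sum>(i,j)\<in>RR N m k. TT (zz bv y (m - 1 - i)) (zz bv y (k - 1 - j)) (zz bv y (i + j + 1)))"
    unfolding sum_negf[symmetric]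
  proof (rule sum.cong[OF refl])
    fix x :: "nat \<times> nat"
    obtain i j where x: "x = (i,j)" by (cases x)
    have "j + i + 1 = i + j + 1" by simp
    then show "(\<lambda>(i,j). TT (zz bv y (k - 1 - j)) (zz bv y (m - 1 - i)) (zz bv y (j + i + 1))) x =
       (\<lambda>x. - (case x of (i,j) \<Rightarrow> TT (zz bv y (m - 1 - i)) (zz bv y (k - 1 - j)) (zz bv y (i + j + 1)))) x"
      unfolding x prod.case by (simp only: TT_swap12[of "zz bv y (k - 1 - j)"])
  qed
  finally show ?thesis by simp
qed

lemma HH_zero:
  assumes "m \<le> N" "k \<le> N"
  shows "(\<Sum>(i,j)\<in>RR N m k. TT (zz bv y (m - 1 - i)) (zz bv y (k - 1 - j)) (zz bv y (i + j + 1))) = 0"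
proof (cases "m \<le> k")
  case True
  then show ?thesis using HH_zero_le assms by blast
next
  case False
  then have "k \<le> m" by simp
  then show ?thesis unfolding HH_swap[where N=N and m=m and k=k] using HH_zero_le[where m=k and k=m and N=N and bv=bv and y=y] assms by simp
qed

lemma sum_prod_rearr3:
  "(\<Sum>a\<in>A. \<Sum>b\<in>B. (2 * u a) * (2 * v b) * (\<Sum>c\<in>C. e a b c * w c)) =
    4 * (\<Sum>a\<in>A. \<Sum>b\<in>B. \<Sum>c\<in>C. e a b c * u a * v b * (w c::real))"
  by (simp add: sum_distrib_left mult_ac)

lemma hh_term:
  assumes "1 \<le> m" "1 \<le> k"
  shows "(\<Sum>a\<in>{1,2,3}. \<Sum>b\<in>{1,2,3}. pd (Hk bv m) i a y * pd (Hk bv k) j b y * PP N y i j a b) =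
    (if i < m \<and> j < k \<and> i + j < N then 4 * TT (zz bv y (m - 1 - i)) (zz bv y (k - 1 - j)) (zz bv y (i + j + 1)) else 0)"
proof -
  have "(\<Sum>a\<in>{1,2,3}. \<Sum>b\<in>{1,2,3}. pd (Hk bv m) i a y * pd (Hk bv k) j b y * PP N y i j a b) =
     (\<Sum>a\<in>{1,2,3}. \<Sum>b\<in>{1,2,3}. (if i < m then 2 * zz bv y (m - 1 - i) a else 0) * (if j < k then 2 * zz bv y (k - 1 - j) b else 0) * PP N y i j a b)"
  proof (rule sum.cong[OF refl], rule sum.cong[OF refl])
    fix a b assume ha: "a \<in> {1,2,3::nat}" and hb: "b \<in> {1,2,3::nat}"
    show "pd (Hk bv m) i a y * pd (Hk bv k) j b y * PP N y i j a b =
      (if i < m then 2 * zz bv y (m - 1 - i) a else 0) * (if j < k then 2 * zz bv y (k - 1 - j) b else 0) * PP N y i j a b"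
      by (simp only: pd_H[OF ha assms(1)] pd_H[OF hb assms(2)])
  qed
  also have "\<dots> = (if i < m \<and> j < k \<and> i + j < N then 4 * TT (zz bv y (m - 1 - i)) (zz bv y (k - 1 - j)) (zz bv y (i + j + 1)) else 0)"
  proof (cases "i < m \<and> j < k \<and> i + j < N")
    case True
    have zz1: "zz bv y (i + j + 1) = y (i + j)" by (simp add: zz_def)
    have "(\<Sum>a\<in>{1,2,3}. \<Sum>b\<in>{1,2,3}. (if i < m then 2 * zz bv y (m - 1 - i) a else 0) * (if j < k then 2 * zz bv y (k - 1 - j) b else 0) * PP N y i j a b)
      = (\<Sum>a\<in>{1,2,3}. \<Sum>b\<in>{1,2,3}. (2 * zz bv y (m - 1 - i) a) * (2 * zz bv y (k - 1 - j) b) * (\<Sum>c\<in>{1,2,3}. eps a b c * zz bv y (i + j + 1) c))"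
      unfolding zz1 PP_def using True by (simp only: if_True if_P)
    also have "\<dots> = 4 * TT (zz bv y (m - 1 - i)) (zz bv y (k - 1 - j)) (zz bv y (i + j + 1))"
      unfolding TT_def by (rule sum_prod_rearr3)
    finally show ?thesis by (simp only: if_P[OF True])
  next
    case False
    have z: "\<And>a b. (if i < m then 2 * zz bv y (m - 1 - i) a else 0) * (if j < k then 2 * zz bv y (k - 1 - j) b else 0) * PP N y i j a b = 0"
      using False unfolding PP_def by (auto simp del: sum.insert)
    show ?thesis by (simp only: z sum.neutral_const if_not_P[OF False])
  qed
  finally show ?thesis .
qed

lemma HH_form:
  assumes "1 \<le> m" "1 \<le> k" "m \<le> N" "k \<le> N"
  shows "pbracket N (Hk bv m) (Hk bv k) y =
    4 * (\<Sum>(i,j)\<in>RR N m k. TT (zz bv y (m - 1 - i)) (zz bv y (k - 1 - j)) (zz bv y (i + j + 1)))"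
proof -
  define G where "G = (\<lambda>(i,j). 4 * TT (zz bv y (m - 1 - i)) (zz bv y (k - 1 - j)) (zz bv y (i + j + 1)))"
  have "pbracket N (Hk bv m) (Hk bv k) y = (\<Sum>i<N. \<Sum>j<N. if (i,j) \<in> RR N m k then G (i,j) else 0)"
    unfolding pbracket_PP
  proof (rule sum.cong[OF refl], rule sum.cong[OF refl])
    fix i j
    show "(\<Sum>a\<in>{1,2,3}. \<Sum>b\<in>{1,2,3}. pd (Hk bv m) i a y * pd (Hk bv k) j b y * PP N y i j a b) =
       (if (i,j) \<in> RR N m k then G (i,j) else 0)"
      unfolding hh_term[OF assms(1,2)] G_def RR_def by simp
  qed
  also have "\<dots> = (\<Sum>x\<in>{..<N} \<times> {..<N}. if x \<in> RR N m k then G x else 0)"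
    by (simp add: sum.cartesian_product)
  also have "\<dots> = sum G ({..<N} \<times> {..<N} \<inter> RR N m k)"
    by (rule sum.inter_restrict[symmetric]) simp
  also have "{..<N} \<times> {..<N} \<inter> RR N m k = RR N m k"
    using assms by (auto simp: RR_def)
  finally show ?thesis by (simp add: G_def sum_distrib_left case_prod_beta)
qed


theorem proposition2:
  fixes N :: nat and bv :: "nat \<Rightarrow> real"
  assumes "N \<ge> 1"
  shows "(\<forall>y lam mu. lam \<noteq> 0 \<longrightarrow>
           4 * det (Lax N bv y lam - msc mu (mat 1)) =
             4 * mu ^ 2 + of_real (ip bv bv)
             + (\<Sum>k\<in>{1..N}. of_real (Hk bv k y) * inverse lam ^ k)
             + (\<Sum>k\<in>{1..N}. of_real (Ck N k y) * inverse lam ^ (N + k)))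
       \<and> (\<forall>i\<in>{1..N}. \<forall>k\<in>{1..N}.
            pbracket N (Hk bv i) (Hk bv k) = (\<lambda>y. 0)
          \<and> pbracket N (Ck N i) (Hk bv k) = (\<lambda>y. 0)
          \<and> pbracket N (Ck N i) (Ck N k) = (\<lambda>y. 0))
       \<and> (\<forall>k\<in>{1..N}. \<forall>j<N. \<forall>\<beta>\<in>{1,2,3}.
            pbracket N (Ck N k) (coord j \<beta>) = (\<lambda>y. 0))"
  proof (intro conjI)
  show "\<forall>y lam mu. lam \<noteq> 0 \<longrightarrow>
           4 * det (Lax N bv y lam - msc mu (mat 1)) =
             4 * mu ^ 2 + of_real (ip bv bv)
             + (\<Sum>k\<in>{1..N}. of_real (Hk bv k y) * inverse lam ^ k)
             + (\<Sum>k\<in>{1..N}. of_real (Ck N k y) * inverse lam ^ (N + k))"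
    using det_full by blast
  show "\<forall>i\<in>{1..N}. \<forall>k\<in>{1..N}.
            pbracket N (Hk bv i) (Hk bv k) = (\<lambda>y. 0)
          \<and> pbracket N (Ck N i) (Hk bv k) = (\<lambda>y. 0)
          \<and> pbracket N (Ck N i) (Ck N k) = (\<lambda>y. 0)"
  proof (intro ballI conjI ext)
    fix i k y assume i: "i \<in> {1..N}" and k: "k \<in> {1..N}"
    then have i1: "1 \<le> i" "i \<le> N" and k1: "1 \<le> k" "k \<le> N" by auto
    have cas: "\<And>j b. j < N \<Longrightarrow> b \<in> {1,2,3} \<Longrightarrow> pbracket N (Ck N i) (coord j b) y = 0"
      using casimir i1 by blast
    show "pbracket N (Hk bv i) (Hk bv k) y = 0"
      unfolding HH_form[OF i1(1) k1(1) i1(2) k1(2)] using HH_zero[OF i1(2) k1(2)] by simp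
    show "pbracket N (Ck N i) (Hk bv k) y = 0"
      by (rule casimir_zero_bracket[OF cas])
    show "pbracket N (Ck N i) (Ck N k) y = 0"
      by (rule casimir_zero_bracket[OF cas])
  qed
  show "\<forall>k\<in>{1..N}. \<forall>j<N. \<forall>\<beta>\<in>{1,2,3}.
            pbracket N (Ck N k) (coord j \<beta>) = (\<lambda>y. 0)"
  proof (intro ballI allI impI ext)
    fix k j \<beta> y assume "k \<in> {1..N}" "j < N" "\<beta> \<in> {1,2,3::nat}"
    then show "pbracket N (Ck N k) (coord j \<beta>) y = 0" using casimir by auto
  qed
qed

end
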